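(* There exists an integer $N$ such that for every set $P$ of $n\geq N$ points in general position in the plane, $\binom{n}{2}-5\leq \mu(D(P))\leq \binom{n}{2}-4$.
   Context: A set of points in the plane is in general position if no three of its points are collinear. The disjointness graph of segments $D(P)$ is the graph whose vertices are all closed straight-line segments with both endpoints in $P$, two being adjacent if and only if they are disjoint. For a graph $G$ and $U\subseteq V(G)$, two distinct vertices $x,y\in U$ are $U$-mutually visible if $G$ contains a shortest $x$-$y$ path none of whose internal vertices lies in $U$; $U$ is a mutual-visibility set if every two distinct vertices of $U$ are $U$-mutually visible. The mutual-visibility number $\mu(G)$ is the maximum size of a mutual-visibility set of $G$. *)

theory Defs
  imports "HOL-Analysis.Analysis"
begin

definition general_position :: "(real^2) set \<Rightarrow> bool" where
  "general_position P \<longleftrightarrow>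
     (\<forall>a\<in>P. \<forall>b\<in>P. \<forall>c\<in>P. a \<noteq> b \<and> a \<noteq> c \<and> b \<noteq> c \<longrightarrow> \<not> collinear {a, b, c})"

definition is_path :: "'v set \<Rightarrow> ('v \<Rightarrow> 'v \<Rightarrow> bool) \<Rightarrow> 'v \<Rightarrow> 'v \<Rightarrow> 'v list \<Rightarrow> bool" where
  "is_path V E x y p \<longleftrightarrow> p \<noteq> [] \<and> hd p = x \<and> last p = y \<and> set p \<subseteq> V
     \<and> (\<forall>i. Suc i < length p \<longrightarrow> E (p ! i) (p ! Suc i))"

definition shortest_path :: "'v set \<Rightarrow> ('v \<Rightarrow> 'v \<Rightarrow> bool) \<Rightarrow> 'v \<Rightarrow> 'v \<Rightarrow> 'v list \<Rightarrow> bool" where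
  "shortest_path V E x y p \<longleftrightarrow> is_path V E x y p
     \<and> (\<forall>q. is_path V E x y q \<longrightarrow> length p \<le> length q)"

definition mutually_visible :: "'v set \<Rightarrow> ('v \<Rightarrow> 'v \<Rightarrow> bool) \<Rightarrow> 'v set \<Rightarrow> 'v \<Rightarrow> 'v \<Rightarrow> bool" where
  "mutually_visible V E U x y \<longleftrightarrow>
     (\<exists>p. shortest_path V E x y p \<and> set (butlast (tl p)) \<inter> U = {})"

definition mutual_visibility_set :: "'v set \<Rightarrow> ('v \<Rightarrow> 'v \<Rightarrow> bool) \<Rightarrow> 'v set \<Rightarrow> bool" where
  "mutual_visibility_set V E U \<longleftrightarrow> U \<subseteq> V \<and>
     (\<forall>x\<in>U. \<forall>y\<in>U. x \<noteq> y \<longrightarrow> mutually_visible V E U x y)"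

definition mu :: "'v set \<Rightarrow> ('v \<Rightarrow> 'v \<Rightarrow> bool) \<Rightarrow> nat" where
  "mu V E = Max {card U | U. mutual_visibility_set V E U}"

text \<open>Disjointness graph of segments D(P): vertices are the closed segments with
  both (distinct) endpoints in P; two are adjacent iff they are disjoint.\<close>

definition seg_vertices :: "(real^2) set \<Rightarrow> (real^2) set set" where
  "seg_vertices P = {closed_segment a b | a b. a \<in> P \<and> b \<in> P \<and> a \<noteq> b}"

definition seg_disjoint :: "(real^2) set \<Rightarrow> (real^2) set \<Rightarrow> bool" where
  "seg_disjoint S T \<longleftrightarrow> S \<inter> T = {}"

end

theory Submission
  imports Defs "HOL-Library.Ramsey"
begin

definition orient :: "real^2 \<Rightarrow> real^2 \<Rightarrow> real^2 \<Rightarrow> real" where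
  "orient a b c = (b$1 - a$1)*(c$2 - a$2) - (b$2 - a$2)*(c$1 - a$1)"

lemma orient_affine:
  "orient a b ((1-t) *\<^sub>R u + t *\<^sub>R v) = (1-t) * orient a b u + t * orient a b v"
  by (simp add: orient_def algebra_simps)

lemma orient_cyclic: "orient a b c = orient b c a"
  by (simp add: orient_def algebra_simps)

lemma orient_self1: "orient a b a = 0" and orient_self2: "orient a b b = 0"
  by (simp_all add: orient_def)

lemma orient_zero_collinear:
  assumes "orient a b c = 0" shows "collinear {a,b,c}"
proof (cases "a = c")
  case True then show ?thesis by (simp add: collinear_3_expand)
next
  case False
  show ?thesis
  proof (cases "a$1 = c$1")
    case True
    with False have ne: "a$2 \<noteq> c$2" by (metis exhaust_2 vec_eq_iff)
    define u where "u = (b$2 - c$2)/(a$2 - c$2)"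
    have "b = u *\<^sub>R a + (1 - u) *\<^sub>R c"
    proof -
      have "b$1 = c$1" using assms True ne unfolding orient_def
        by (smt (verit, ccfv_SIG) mult_cancel_left right_minus_eq mult.commute)
      moreover have "b$2 = u * a$2 + (1-u)*c$2"
      proof -
        have "u * (a$2 - c$2) = b$2 - c$2" using ne by (simp add: u_def)
        then show ?thesis by (simp add: algebra_simps)
      qed
      ultimately show ?thesis using True by (auto simp: vec_eq_iff forall_2 algebra_simps)
    qed
    then show ?thesis by (auto simp add: collinear_3_expand)
  next
    case ne: False
    define u where "u = (b$1 - c$1)/(a$1 - c$1)"
    have "b = u *\<^sub>R a + (1 - u) *\<^sub>R c"
    proof -
      have "b$1 = u * a$1 + (1-u)*c$1"
      proof -
        have "u * (a$1 - c$1) = b$1 - c$1" using ne by (simp add: u_def)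
        then show ?thesis by (simp add: algebra_simps)
      qed
      moreover have "b$2 = u * a$2 + (1-u)*c$2"
      proof -
        have "(b$1 - a$1)*(c$2 - a$2) = (b$2 - a$2)*(c$1 - a$1)" using assms by (simp add: orient_def)
        then have "(b$1 - c$1)*(a$2 - c$2) = (b$2 - c$2)*(a$1 - c$1)" by algebra
        then have "u * (a$2 - c$2) = b$2 - c$2" using ne unfolding u_def by (simp add: field_simps)
        then show ?thesis by (simp add: algebra_simps)
      qed
      ultimately show ?thesis by (auto simp: vec_eq_iff forall_2 algebra_simps)
    qed
    then show ?thesis by (auto simp add: collinear_3_expand)
  qed
qed

lemma in_segment_collinear:
  fixes a b c :: "real^2"
  shows "c \<in> closed_segment a b \<Longrightarrow> collinear {a,b,c}"
  using collinear_between_cases[of a b c] between_mem_segment by blast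

lemma pos_on_seg:
  assumes "s * orient a b u > 0" "s * orient a b v > 0" "z \<in> closed_segment u v"
  shows "s * orient a b z > 0"
proof -
  obtain t where t: "0 \<le> t" "t \<le> 1" "z = (1-t) *\<^sub>R u + t *\<^sub>R v"
    using assms(3) unfolding closed_segment_def by blast
  have "orient a b z = (1-t) * orient a b u + t * orient a b v"
    unfolding t(3) by (rule orient_affine)
  then have "s * orient a b z = s * ((1-t) * orient a b u + t * orient a b v)"
    by simp
  also have "... = (1-t) * (s * orient a b u) + t * (s * orient a b v)"
    by (simp add: algebra_simps)
  finally have "s * orient a b z = (1-t) * (s * orient a b u) + t * (s * orient a b v)" .
  also have "... > 0"
  proof (cases "t = 0")
    case True then show ?thesis using assms by simp
  next
    case False
    then have "t * (s * orient a b v) > 0" using t assms by simp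
    moreover have "(1-t) * (s * orient a b u) \<ge> 0" using t assms by simp
    ultimately show ?thesis by linarith
  qed
  finally show ?thesis .
qed

lemma zero_on_seg:
  assumes "z \<in> closed_segment a b" shows "orient a b z = 0"
proof -
  obtain t where t: "z = (1-t) *\<^sub>R a + t *\<^sub>R b"
    using assms unfolding closed_segment_def by blast
  show ?thesis by (simp add: t orient_affine orient_self1 orient_self2)
qed

lemma real_mid:
  fixes A B ta tb tc :: real
  assumes "(1-ta)*A + ta*B > 0" "(1-tc)*A + tc*B > 0" "ta \<le> tb" "tb \<le> tc"
  shows "(1-tb)*A + tb*B > 0"
proof (cases "B - A \<ge> 0")
  case True
  then have "(tb - ta) * (B - A) \<ge> 0" using assms by simp
  then show ?thesis using assms(1) by (simp add: algebra_simps)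
next
  case False
  then have "(tc - tb) * (B - A) \<le> 0" using assms by (simp add: mult_nonneg_nonpos)
  then show ?thesis using assms(2) by (simp add: algebra_simps)
qed

lemma three_real:
  fixes A1 B1 A2 B2 A3 B3 t1 t2 t3 :: real
  assumes "(1-t1)*A1 + t1*B1 = 0" "(1-t2)*A1 + t2*B1 > 0" "(1-t3)*A1 + t3*B1 > 0"
    "(1-t2)*A2 + t2*B2 = 0" "(1-t1)*A2 + t1*B2 > 0" "(1-t3)*A2 + t3*B2 > 0"
    "(1-t3)*A3 + t3*B3 = 0" "(1-t1)*A3 + t1*B3 > 0" "(1-t2)*A3 + t2*B3 > 0"
  shows False
proof -
  consider "t2 \<le> t1 \<and> t1 \<le> t3" | "t3 \<le> t1 \<and> t1 \<le> t2" | "t1 \<le> t2 \<and> t2 \<le> t3"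
    | "t3 \<le> t2 \<and> t2 \<le> t1" | "t1 \<le> t3 \<and> t3 \<le> t2" | "t2 \<le> t3 \<and> t3 \<le> t1" by linarith
  then show False
  proof cases
    case 1 then show ?thesis using real_mid[of t2 A1 B1 t3 t1] assms by linarith
  next
    case 2 then show ?thesis using real_mid[of t3 A1 B1 t2 t1] assms by linarith
  next
    case 3 then show ?thesis using real_mid[of t1 A2 B2 t3 t2] assms by linarith
  next
    case 4 then show ?thesis using real_mid[of t3 A2 B2 t1 t2] assms by linarith
  next
    case 5 then show ?thesis using real_mid[of t1 A3 B3 t2 t3] assms by linarith
  next
    case 6 then show ?thesis using real_mid[of t2 A3 B3 t1 t3] assms by linarith
  qed
qed

definition wseg :: "(nat \<Rightarrow> real^2) \<Rightarrow> nat \<Rightarrow> (real^2) set" where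
  "wseg c k = closed_segment (c (2*k)) (c (2*k+1))"

definition config :: "(real^2) set \<Rightarrow> (nat \<Rightarrow> real^2) \<Rightarrow> real \<Rightarrow> bool" where
  "config P c s \<longleftrightarrow> (\<forall>i<10. c i \<in> P) \<and> inj_on c {..<10} \<and>
     (\<forall>k<5. \<forall>i<10. i \<noteq> 2*k \<and> i \<noteq> 2*k+1 \<longrightarrow> s * orient (c (2*k)) (c (2*k+1)) (c i) > 0)"

lemma w_pos:
  assumes "config P c s" "k < 5" "j < 5" "j \<noteq> k" "z \<in> wseg c j"
  shows "s * orient (c (2*k)) (c (2*k+1)) z > 0"
proof -
  have "s * orient (c (2*k)) (c (2*k+1)) (c (2*j)) > 0" "s * orient (c (2*k)) (c (2*k+1)) (c (2*j+1)) > 0"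
    using assms(1-4) unfolding config_def by auto
  then show ?thesis using pos_on_seg assms(5) unfolding wseg_def by blast
qed

lemma w_zero: "z \<in> wseg c k \<Longrightarrow> orient (c (2*k)) (c (2*k+1)) z = 0"
  unfolding wseg_def by (rule zero_on_seg)

lemma w_disj:
  assumes "config P c s" "k < 5" "j < 5" "j \<noteq> k"
  shows "wseg c j \<inter> wseg c k = {}"
  using w_pos[OF assms] w_zero[of _ c k] by fastforce

lemma no_three:
  assumes "config P c s" "k1 < 5" "k2 < 5" "k3 < 5" "k1 \<noteq> k2" "k1 \<noteq> k3" "k2 \<noteq> k3"
    and z1: "z1 \<in> closed_segment p q" "z1 \<in> wseg c k1"
    and z2: "z2 \<in> closed_segment p q" "z2 \<in> wseg c k2"
    and z3: "z3 \<in> closed_segment p q" "z3 \<in> wseg c k3"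
  shows False
proof -
  obtain t1 where t1: "z1 = (1-t1) *\<^sub>R p + t1 *\<^sub>R q" using z1 unfolding closed_segment_def by blast
  obtain t2 where t2: "z2 = (1-t2) *\<^sub>R p + t2 *\<^sub>R q" using z2 unfolding closed_segment_def by blast
  obtain t3 where t3: "z3 = (1-t3) *\<^sub>R p + t3 *\<^sub>R q" using z3 unfolding closed_segment_def by blast
  define O1 where "O1 = (\<lambda>z. s * orient (c (2*k1)) (c (2*k1+1)) z)"
  define O2 where "O2 = (\<lambda>z. s * orient (c (2*k2)) (c (2*k2+1)) z)"
  define O3 where "O3 = (\<lambda>z. s * orient (c (2*k3)) (c (2*k3+1)) z)"
  have aff: "\<And>F a b t. F = (\<lambda>z. s * orient a b z) \<Longrightarrow> F ((1-t) *\<^sub>R p + t *\<^sub>R q) = (1-t) * F p + t * F q"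
  proof -
    fix F a b t assume "F = (\<lambda>z. s * orient a b z)"
    then have "F ((1-t) *\<^sub>R p + t *\<^sub>R q) = s * ((1-t) * orient a b p + t * orient a b q)"
      by (simp only: orient_affine)
    then show "F ((1-t) *\<^sub>R p + t *\<^sub>R q) = (1-t) * F p + t * F q"
      using \<open>F = _\<close> by (simp add: algebra_simps)
  qed
  have "O1 z1 = 0" "O2 z2 = 0" "O3 z3 = 0"
    using w_zero z1 z2 z3 unfolding O1_def O2_def O3_def by auto
  moreover have "O1 z2 > 0" "O1 z3 > 0" "O2 z1 > 0" "O2 z3 > 0" "O3 z1 > 0" "O3 z2 > 0"
    unfolding O1_def O2_def O3_def using w_pos[OF assms(1)] assms z1 z2 z3 by metis+
  ultimately show False
    using three_real[of t1 "O1 p" "O1 q" t2 t3 "O2 p" "O2 q" "O3 p" "O3 q"]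
    unfolding t1 t2 t3 aff[OF O1_def] aff[OF O2_def] aff[OF O3_def] by linarith
qed

lemma sorted_triple:
  fixes i j k i' j' k' :: nat
  assumes "{i,j,k} = {i',j',k'}" "i<j" "j<k" "i'<j'" "j'<k'"
  shows "i = i' \<and> j = j' \<and> k = k'"
  using assms by (smt (verit) insert_iff singletonD order.strict_trans less_irrefl)
lemma three_elems:
  assumes "finite S" "2 < card S"
  shows "\<exists>a b c. a\<in>S \<and> b\<in>S \<and> c\<in>S \<and> a\<noteq>b \<and> a\<noteq>c \<and> b\<noteq>c"
proof -
  obtain T where "T \<subseteq> S" "card T = 3" using assms obtain_subset_with_card_n[of 3 S] by force
  then show ?thesis unfolding card_3_iff by blast
qed

lemma at_most_two:
  assumes "config P c s"
  shows "card {k. k<5 \<and> closed_segment p q \<inter> wseg c k \<noteq> {}} \<le> 2"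
proof (rule ccontr)
  let ?S = "{k. k<5 \<and> closed_segment p q \<inter> wseg c k \<noteq> {}}"
  assume "\<not> card ?S \<le> 2"
  then obtain k1 k2 k3 where k: "k1 \<in> ?S" "k2 \<in> ?S" "k3 \<in> ?S" "k1\<noteq>k2" "k1\<noteq>k3" "k2\<noteq>k3"
    using three_elems[of ?S] by force
  then obtain z1 z2 z3 where "z1 \<in> closed_segment p q" "z1 \<in> wseg c k1"
    "z2 \<in> closed_segment p q" "z2 \<in> wseg c k2" "z3 \<in> closed_segment p q" "z3 \<in> wseg c k3"
    by blast
  then show False using no_three[OF assms, of k1 k2 k3] k by blast
qed

lemma avoid2:
  assumes "config P c s"
  shows "\<exists>k<5. closed_segment p q \<inter> wseg c k = {} \<and> closed_segment p' q' \<inter> wseg c k = {}"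
proof (rule ccontr)
  let ?S1 = "{k. k<5 \<and> closed_segment p q \<inter> wseg c k \<noteq> {}}"
  let ?S2 = "{k. k<5 \<and> closed_segment p' q' \<inter> wseg c k \<noteq> {}}"
  assume "\<not> ?thesis"
  then have "{..<5} \<subseteq> ?S1 \<union> ?S2" by auto
  then have "card {..<5::nat} \<le> card (?S1 \<union> ?S2)" by (intro card_mono) auto
  also have "... \<le> card ?S1 + card ?S2" by (rule card_Un_le)
  also have "... \<le> 4" using at_most_two[OF assms, of p q] at_most_two[OF assms, of p' q'] by linarith
  finally show False by simp
qed

lemma orient_nonzero:
  assumes "general_position P" "a \<in> P" "b \<in> P" "d \<in> P" "a \<noteq> b" "a \<noteq> d" "b \<noteq> d"
  shows "orient a b d \<noteq> 0"
  using assms orient_zero_collinear unfolding general_position_def by blast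

lemma exists_config:
  "\<exists>N. \<forall>P. finite P \<and> card P \<ge> N \<and> general_position P \<longrightarrow> (\<exists>c s. config P c s)"
proof -
  obtain N :: nat where N: "partn_lst {..<N} [10,10] 3" using ramsey_full[of "[10,10]" 3] by blast
  have "finite P \<and> card P \<ge> N \<and> general_position P \<longrightarrow> (\<exists>c s. config P c s)" for P
  proof safe
    assume fin: "finite P" and cardP: "card P \<ge> N" and gp: "general_position P"
    define n where "n = card P"
    have Nn: "partn_lst {..<n} [10,10] 3" using partn_lst_greater_resource[OF N] cardP n_def by blast
    obtain e where e: "bij_betw e {..<n} P" using ex_bij_betw_nat_finite[OF fin] n_def
      by (metis atLeast0LessThan)
    define f where "f = (\<lambda>X::nat set. if \<exists>i j k. X={i,j,k} \<and> i<j \<and> j<k \<and> orient (e i) (e j) (e k) > 0 then 0 else (1::nat))"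
    have fPi: "f \<in> nsets {..<n} 3 \<rightarrow> {..<length [10::nat,10]}" unfolding f_def by auto
    obtain col H where col: "col < length [10::nat,10]" and H: "H \<in> nsets {..<n} ([10,10]!col)"
      and hom: "f ` (nsets H 3) \<subseteq> {col}"
      using partn_lstE[OF Nn fPi] by blast
    have Hsub: "H \<subseteq> {..<n}" and finH: "finite H" and cardH: "card H = 10"
    proof -
      have "[10::nat,10] ! col = 10" using col by (cases col) (auto simp: nth_Cons_Suc less_Suc_eq)
      then show "H \<subseteq> {..<n}" "finite H" "card H = 10" using H by (auto simp: nsets_def)
    qed
    define L where "L = sorted_list_of_set H"
    have lenL: "length L = 10" using cardH L_def by simp
    have setL: "set L = H" using finH L_def by simp
    have sortL: "sorted_wrt (<) L" using L_def by simp
    define h where "h = (\<lambda>j. L ! j)"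
    have hmono: "h a < h b" if "a < b" "b < 10" for a b
      using sorted_wrt_nth_less[OF sortL that(1)] that lenL h_def by simp
    have hH: "h a \<in> H" if "a < 10" for a using that lenL setL h_def nth_mem by fastforce
    have hn: "h a < n" if "a < 10" for a using hH[OF that] Hsub by auto
    define c where "c = (\<lambda>j. e (h j))"
    define s where "s = (if col = 0 then (1::real) else -1)"
    have cP: "c a \<in> P" if "a < 10" for a using e hn[OF that] c_def bij_betwE by fastforce
    have cinj: "inj_on c {..<10}"
    proof (rule inj_onI)
      fix a b assume ab: "a \<in> {..<10::nat}" "b \<in> {..<10::nat}" "c a = c b"
      then have "h a = h b" using bij_betw_imp_inj_on[OF e] hn c_def by (auto dest: inj_onD)
      then show "a = b" using hmono ab by (metis lessThan_iff linorder_neqE_nat order.irrefl)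
    qed
    have key: "s * orient (c a) (c b) (c d) > 0" if abd: "a < b" "b < d" "d < 10" for a b d
    proof -
      have "h a < h b" "h b < h d" using hmono abd by auto
      then have "card {h a, h b, h d} = 3" by simp
      then have "{h a, h b, h d} \<in> nsets H 3"
        using hH abd by (auto simp: nsets_def)
      then have fv: "f {h a, h b, h d} = col" using hom by blast
      have ne: "orient (c a) (c b) (c d) \<noteq> 0"
      proof (rule orient_nonzero[OF gp])
        show "c a \<in> P" "c b \<in> P" "c d \<in> P" using cP abd by auto
        show "c a \<noteq> c b" "c a \<noteq> c d" "c b \<noteq> c d"
          using inj_onD[OF cinj] abd by (metis lessThan_iff order.strict_trans less_irrefl)+
      qed
      show ?thesis
      proof (cases "col = 0")
        case True
        then obtain i j k where ijk: "{h a, h b, h d} = {i,j,k}" "i<j" "j<k" "orient (e i) (e j) (e k) > 0"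
          using fv unfolding f_def by (metis one_neq_zero)
        then have "i = h a \<and> j = h b \<and> k = h d"
          using sorted_triple[of i j k "h a" "h b" "h d"] hmono abd by auto
        then show ?thesis using ijk True s_def c_def by simp
      next
        case False
        then have "\<not> orient (c a) (c b) (c d) > 0"
          using fv hmono abd unfolding f_def c_def by (metis (mono_tags, lifting) order.strict_trans)
        then show ?thesis using ne False s_def by simp
      qed
    qed
    have third: "s * orient (c (2*k)) (c (2*k+1)) (c i) > 0"
      if k: "k < 5" and i: "i < 10" "i \<noteq> 2*k" "i \<noteq> 2*k+1" for k i
    proof (cases "i < 2*k")
      case True
      then have "s * orient (c i) (c (2*k)) (c (2*k+1)) > 0" using key k by auto
      then show ?thesis by (metis orient_cyclic)
    next
      case False
      then show ?thesis using key k i by auto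
    qed
    have "config P c s"
      unfolding config_def using cP cinj third by blast
    then show "\<exists>c s. config P c s" by blast
  qed
  then show ?thesis by blast
qed

lemma card_seg_vertices:
  assumes "finite P"
  shows "finite (seg_vertices P)" "card (seg_vertices P) = card P choose 2"
proof -
  have eq: "seg_vertices P = (\<lambda>X. convex hull X) ` nsets P 2"
  proof
    show "seg_vertices P \<subseteq> (\<lambda>X. convex hull X) ` nsets P 2"
    proof
      fix s assume "s \<in> seg_vertices P"
      then obtain a b where ab: "s = closed_segment a b" "a \<in> P" "b \<in> P" "a \<noteq> b"
        unfolding seg_vertices_def by blast
      then have "{a,b} \<in> nsets P 2" by simp
      moreover have "s = convex hull {a,b}" using ab segment_convex_hull by blast
      ultimately show "s \<in> (\<lambda>X. convex hull X) ` nsets P 2" by blast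
    qed
    show "(\<lambda>X. convex hull X) ` nsets P 2 \<subseteq> seg_vertices P"
    proof
      fix s assume "s \<in> (\<lambda>X. convex hull X) ` nsets P 2"
      then obtain X where X: "X \<in> nsets P 2" "s = convex hull X" by blast
      then obtain a b where "X = {a,b}" "a \<in> P" "b \<in> P" "a \<noteq> b" by (auto elim!: nsets2_E)
      then show "s \<in> seg_vertices P" using X segment_convex_hull unfolding seg_vertices_def by blast
    qed
  qed
  have inj: "inj_on (\<lambda>X. convex hull X) (nsets P 2)"
  proof (rule inj_onI)
    fix X Y assume XY: "X \<in> nsets P 2" "Y \<in> nsets P 2" "convex hull X = convex hull Y"
    obtain a b where "X = {a,b}" using XY(1) by (auto elim!: nsets2_E)
    moreover obtain c d where "Y = {c,d}" using XY(2) by (auto elim!: nsets2_E)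
    ultimately show "X = Y" using XY(3) closed_segment_eq[of a b c d] segment_convex_hull by metis
  qed
  show "finite (seg_vertices P)" unfolding eq using assms finite_imp_finite_nsets by (intro finite_imageI) blast
  show "card (seg_vertices P) = card P choose 2"
    using eq card_image[OF inj] card_nsets by simp
qed

lemma path_len_ge2:
  assumes "is_path V E x y p" "x \<noteq> y" shows "length p \<ge> 2"
proof (rule ccontr)
  assume "\<not> length p \<ge> 2"
  moreover have "p \<noteq> []" using assms unfolding is_path_def by simp
  moreover have "length p > 0" using \<open>p \<noteq> []\<close> by simp
  ultimately have "length p = Suc 0" by linarith
  then obtain a where "p = [a]" using length_Suc_conv[of p 0] by auto
  then show False using assms unfolding is_path_def by auto
qed

lemma path_len_ge3:
  assumes "is_path V E x y p" "x \<noteq> y" "\<not> E x y" shows "length p \<ge> 3"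
proof (rule ccontr)
  assume "\<not> length p \<ge> 3"
  then have "length p = 2" using path_len_ge2[OF assms(1,2)] by simp
  then obtain a b where "p = [a,b]" by (cases p; cases "tl p") auto
  then show False using assms unfolding is_path_def by (auto dest: spec[of _ 0])
qed

lemma path2: "x \<in> V \<Longrightarrow> y \<in> V \<Longrightarrow> E x y \<Longrightarrow> is_path V E x y [x,y]"
  unfolding is_path_def by (auto simp: less_Suc_eq)

lemma path3: "x \<in> V \<Longrightarrow> y \<in> V \<Longrightarrow> z \<in> V \<Longrightarrow> E x z \<Longrightarrow> E z y \<Longrightarrow> is_path V E x y [x,z,y]"
  unfolding is_path_def by (auto simp: less_Suc_eq nth_Cons')

lemma mv_lower:
  assumes W: "W \<subseteq> V"
    and cn: "\<And>x y. x \<in> V - W \<Longrightarrow> y \<in> V - W \<Longrightarrow> x \<noteq> y \<Longrightarrow> \<not> E x y \<Longrightarrow> \<exists>z\<in>W. E x z \<and> E z y"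
  shows "mutual_visibility_set V E (V - W)"
  unfolding mutual_visibility_set_def
proof (intro conjI ballI impI)
  show "V - W \<subseteq> V" by blast
  fix x y assume x: "x \<in> V - W" and y: "y \<in> V - W" and xy: "x \<noteq> y"
  show "mutually_visible V E (V - W) x y"
  proof (cases "E x y")
    case True
    have "length [x,y] \<le> length q" if "is_path V E x y q" for q using path_len_ge2[OF that xy] by simp
    then have "shortest_path V E x y [x,y]"
      unfolding shortest_path_def using path2[of x V y E] x y True by auto
    then show ?thesis unfolding mutually_visible_def by (intro exI[of _ "[x,y]"]) auto
  next
    case False
    then obtain z where z: "z \<in> W" "E x z" "E z y" using cn x y xy by blast
    have "length [x,z,y] \<le> length q" if "is_path V E x y q" for q using path_len_ge3[OF that xy False] by simp
    then have "shortest_path V E x y [x,z,y]"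
      unfolding shortest_path_def using path3[of x V y z E] x y z W by auto
    then show ?thesis unfolding mutually_visible_def using z by (intro exI[of _ "[x,z,y]"]) auto
  qed
qed

lemma mv_upper:
  assumes "mutual_visibility_set V E U" "x \<in> U" "y \<in> U" "x \<noteq> y" "\<not> E x y"
    "z \<in> V" "E x z" "E z y"
    and nw: "\<And>w. w \<in> V - U \<Longrightarrow> \<not> (E x w \<and> E w y)"
  shows False
proof -
  have UV: "U \<subseteq> V" using assms(1) unfolding mutual_visibility_set_def by blast
  obtain p where p: "shortest_path V E x y p" "set (butlast (tl p)) \<inter> U = {}"
    using assms(1-4) unfolding mutual_visibility_set_def mutually_visible_def by blast
  have "is_path V E x y [x,z,y]" using path3[of x V y z E] assms UV by blast
  then have "length p \<le> length [x,z,y]" using p(1) unfolding shortest_path_def by blast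
  then have l1: "length p \<le> 3" by simp
  have ip: "is_path V E x y p" using p(1) unfolding shortest_path_def by blast
  have l2: "length p \<ge> 3" using path_len_ge3[OF ip assms(4,5)] .
  have l3: "length p = 3" using l1 l2 by simp
  then obtain a b d where pe: "p = [a,b,d]"
  proof -
    obtain a ys where "p = a # ys" "length ys = 2" using l3 length_Suc_conv[of p 2] by (auto simp: numeral_3_eq_3)
    moreover obtain b zs where "ys = b # zs" "length zs = 1" using calculation(2) length_Suc_conv[of ys 1] by (auto simp: numeral_2_eq_2)
    moreover obtain d where "zs = [d]" using calculation(4) length_Suc_conv[of zs 0] by auto
    ultimately show thesis using that by blast
  qed
  have ipd: "p \<noteq> [] \<and> hd p = x \<and> last p = y \<and> set p \<subseteq> V
     \<and> (\<forall>i. Suc i < length p \<longrightarrow> E (p ! i) (p ! Suc i))" using ip unfolding is_path_def .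
  have "a = x" "d = y" "b \<in> V" using ipd pe by auto
  moreover have "E a b" using ipd pe spec[OF conjunct2[OF conjunct2[OF conjunct2[OF conjunct2[OF ipd]]]], of 0] by simp
  moreover have "E b d" using ipd pe spec[OF conjunct2[OF conjunct2[OF conjunct2[OF conjunct2[OF ipd]]]], of 1] by simp
  moreover have "b \<notin> U" using p(2) pe by simp
  ultimately show False using nw[of b] by blast
qed

lemma seg_P_ends:
  assumes gp: "general_position P" and "a \<in> P" "b \<in> P" "d \<in> P" "d \<in> closed_segment a b"
  shows "d = a \<or> d = b"
  using assms in_segment_collinear[OF assms(5)] unfolding general_position_def
  by (metis closed_segment_idem singletonD)

lemma seg_in_V: "a \<in> P \<Longrightarrow> b \<in> P \<Longrightarrow> a \<noteq> b \<Longrightarrow> closed_segment a b \<in> seg_vertices P"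
  unfolding seg_vertices_def by blast

lemma V_cases:
  assumes "w \<in> seg_vertices P"
  obtains a b where "w = closed_segment a b" "a \<in> P" "b \<in> P" "a \<noteq> b"
  using assms unfolding seg_vertices_def by blast

lemma hit_pair:
  assumes fin: "finite P" and n9: "card P \<ge> 9" and gp: "general_position P"
    and WV: "W \<subseteq> seg_vertices P" and W3: "card W \<le> 3"
  shows "\<exists>x y. x \<in> seg_vertices P \<and> y \<in> seg_vertices P \<and> x \<notin> W \<and> y \<notin> W \<and> x \<noteq> y
     \<and> x \<inter> y \<noteq> {} \<and> (\<forall>w\<in>W. w \<inter> x \<noteq> {} \<or> w \<inter> y \<noteq> {})"
proof -
  have finW: "finite W" using WV card_seg_vertices(1)[OF fin] finite_subset by blast
  show ?thesis
  proof (cases "\<exists>q r. q \<in> P \<and> r \<in> P \<and> q \<noteq> r \<and> (\<forall>w\<in>W. q \<in> w \<or> r \<in> w)")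
    case True
    then obtain q r where qr: "q \<in> P" "r \<in> P" "q \<noteq> r" "\<forall>w\<in>W. q \<in> w \<or> r \<in> w" by blast
    define B where "B = (\<Union>w\<in>W. P \<inter> w)"
    have cw: "card (P \<inter> w) \<le> 2" if wW: "w \<in> W" for w
    proof -
      obtain a b where ab: "w = closed_segment a b" "a \<in> P" "b \<in> P" "a \<noteq> b"
        using V_cases WV wW by blast
      have "P \<inter> w \<subseteq> {a,b}"
      proof
        fix d assume "d \<in> P \<inter> w"
        then have "d = a \<or> d = b" using seg_P_ends[OF gp ab(2) ab(3), of d] ab(1) by simp
        then show "d \<in> {a,b}" by simp
      qed
      then have "card (P \<inter> w) \<le> card {a,b}" by (intro card_mono) auto
      also have "... \<le> 2" by (cases "a = b") auto
      finally show ?thesis .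
    qed
    have "card B \<le> (\<Sum>w\<in>W. card (P \<inter> w))" unfolding B_def using finW by (rule card_UN_le)
    also have "... \<le> card W * 2" using sum_bounded_above[of W "\<lambda>w. card (P \<inter> w)" 2] cw by simp
    finally have cB: "card B \<le> 6" using W3 by linarith
    have "B \<subseteq> P" unfolding B_def by blast
    then have finB: "finite B" using fin finite_subset by blast
    have "\<not> P \<subseteq> B \<union> {q,r}"
    proof
      assume "P \<subseteq> B \<union> {q,r}"
      then have "card P \<le> card (B \<union> {q,r})" using finB by (intro card_mono) auto
      also have "... \<le> card B + card {q,r}" by (rule card_Un_le)
      also have "... \<le> 8"
      proof -
        have "card {q,r} \<le> 2" by (cases "q = r") auto
        then show ?thesis using cB by linarith
      qed
      finally show False using n9 by simp
    qed
    then obtain p where p: "p \<in> P" "p \<notin> B" "p \<noteq> q" "p \<noteq> r" by blast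
    have pW: "p \<notin> w" if "w \<in> W" for w using p that unfolding B_def by blast
    define x where "x = closed_segment p q"
    define y where "y = closed_segment p r"
    have xV: "x \<in> seg_vertices P" "y \<in> seg_vertices P" using seg_in_V p qr x_def y_def by auto
    have "x \<notin> W" "y \<notin> W" using pW x_def y_def by auto
    moreover have "x \<noteq> y"
    proof
      assume "x = y"
      then have "{p,q} = {p,r}" unfolding x_def y_def by simp
      then show False using p qr by (auto simp: doubleton_eq_iff)
    qed
    moreover have "p \<in> x \<inter> y" unfolding x_def y_def by simp
    moreover have "\<forall>w\<in>W. w \<inter> x \<noteq> {} \<or> w \<inter> y \<noteq> {}"
    proof
      fix w assume "w \<in> W"
      then have "q \<in> w \<or> r \<in> w" using qr by blast
      moreover have "q \<in> x" "r \<in> y" unfolding x_def y_def by auto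
      ultimately show "w \<inter> x \<noteq> {} \<or> w \<inter> y \<noteq> {}" by blast
    qed
    ultimately show ?thesis using xV by blast
  next
    case False
    note nc = False
    have "W \<noteq> {}"
    proof
      assume "W = {}"
      have "card P \<ge> 2" using n9 by simp
      then obtain q r where "q \<in> P" "r \<in> P" "q \<noteq> r"
        by (metis One_nat_def Suc_1 card_le_Suc_iff fin insertCI not_less_eq_eq zero_less_Suc less_le_not_le)
      then show False using nc \<open>W = {}\<close> by blast
    qed
    then obtain w1 where w1: "w1 \<in> W" by blast
    then obtain a1 b1 where ab1: "w1 = closed_segment a1 b1" "a1 \<in> P" "b1 \<in> P" "a1 \<noteq> b1"
      using V_cases WV by blast
    obtain w2 where w2: "w2 \<in> W" "a1 \<notin> w2" "b1 \<notin> w2" using nc ab1 by blast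
    then obtain a2 b2 where ab2: "w2 = closed_segment a2 b2" "a2 \<in> P" "b2 \<in> P" "a2 \<noteq> b2"
      using V_cases WV by blast
    have a2w2: "a2 \<in> w2" using ab2 by simp
    have a12: "a1 \<noteq> a2" using a2w2 w2 by blast
    obtain w3 where w3: "w3 \<in> W" "a1 \<notin> w3" "a2 \<notin> w3" using nc ab1 ab2 a12 by blast
    then obtain a3 b3 where ab3: "w3 = closed_segment a3 b3" "a3 \<in> P" "b3 \<in> P" "a3 \<noteq> b3"
      using V_cases WV by blast
    have a3w3: "a3 \<in> w3" using ab3 by simp
    have a1w1: "a1 \<in> w1" using ab1 by simp
    have a13: "a1 \<noteq> a3" and a23: "a2 \<noteq> a3" using a3w3 w3 by auto
    have d12: "w1 \<noteq> w2" and d13: "w1 \<noteq> w3" and d23: "w2 \<noteq> w3"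
      using a1w1 w2 w3 a2w2 by auto
    have Weq: "W = {w1,w2,w3}"
    proof -
      have sub: "{w1,w2,w3} \<subseteq> W" using w1 w2 w3 by blast
      have "card {w1,w2,w3} = 3" using d12 d13 d23 by simp
      then show ?thesis using card_subset_eq[OF finW sub] W3 card_mono[OF finW sub] by simp
    qed
    define x where "x = closed_segment a1 a2"
    define y where "y = closed_segment a1 a3"
    have xV: "x \<in> seg_vertices P" "y \<in> seg_vertices P"
      using seg_in_V ab1 ab2 ab3 a12 a13 x_def y_def by auto
    have hit: "\<forall>w\<in>W. w \<inter> x \<noteq> {} \<or> w \<inter> y \<noteq> {}"
    proof -
      have "a1 \<in> w1 \<inter> x" "a2 \<in> w2 \<inter> x" "a3 \<in> w3 \<inter> y" using a1w1 a2w2 a3w3 x_def y_def by auto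
      then show ?thesis using Weq by blast
    qed
    have xW: "x \<notin> W"
    proof
      assume "x \<in> W"
      then consider "x = w1" | "x = w2" | "x = w3" using Weq by blast
      then show False
      proof cases
        case 1
        then have "a2 \<in> w1" using ends_in_segment(2)[of a1 a2] unfolding x_def by blast
        then have "\<forall>w\<in>W. a2 \<in> w \<or> a3 \<in> w" using Weq a2w2 a3w3 by blast
        then show False using nc ab2 ab3 a23 by blast
      next
        case 2 then show False using w2 ends_in_segment(1)[of a1] unfolding x_def by blast
      next
        case 3 then show False using w3 ends_in_segment(1)[of a1] unfolding x_def by blast
      qed
    qed
    have yW: "y \<notin> W"
    proof
      assume "y \<in> W"
      then consider "y = w1" | "y = w2" | "y = w3" using Weq by blast
      then show False
      proof cases
        case 1
        then have "a3 \<in> w1" using ends_in_segment(2)[of a1 a3] unfolding y_def by blast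
        then have "\<forall>w\<in>W. a2 \<in> w \<or> a3 \<in> w" using Weq a2w2 a3w3 by blast
        then show False using nc ab2 ab3 a23 by blast
      next
        case 2 then show False using w2 ends_in_segment(1)[of a1] unfolding y_def by blast
      next
        case 3 then show False using w3 ends_in_segment(1)[of a1] unfolding y_def by blast
      qed
    qed
    have xy: "x \<noteq> y"
    proof
      assume "x = y"
      then have "{a1,a2} = {a1,a3}" unfolding x_def y_def by simp
      then show False using a12 a13 a23 by (auto simp: doubleton_eq_iff)
    qed
    have "a1 \<in> x \<inter> y" unfolding x_def y_def by simp
    then show ?thesis using xV xW yW xy hit by blast
  qed
qed

theorem theorem4:
  shows "\<exists>N::nat. \<forall>P :: (real^2) set. finite P \<and> card P \<ge> N \<and> general_position P \<longrightarrow>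
     int (card P choose 2) - 5 \<le> int (mu (seg_vertices P) seg_disjoint) \<and>
     int (mu (seg_vertices P) seg_disjoint) \<le> int (card P choose 2) - 4"
proof -
  obtain N0 where N0: "\<forall>P. finite P \<and> card P \<ge> N0 \<and> general_position P \<longrightarrow> (\<exists>c s. config P c s)"
    using exists_config by blast
  have "int (card P choose 2) - 5 \<le> int (mu (seg_vertices P) seg_disjoint) \<and>
     int (mu (seg_vertices P) seg_disjoint) \<le> int (card P choose 2) - 4"
    if fin: "finite P" and cP: "card P \<ge> max N0 9" and gp: "general_position P" for P :: "(real^2) set"
  proof -
    have "finite P \<and> card P \<ge> N0 \<and> general_position P" using fin cP gp by simp
    then obtain c s where cfg: "config P c s" using N0 by blast
    define V where "V = seg_vertices P"
    define E where "E = (seg_disjoint :: (real^2) set \<Rightarrow> (real^2) set \<Rightarrow> bool)"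
    have finV: "finite V" and cardV: "card V = card P choose 2"
      using card_seg_vertices[OF fin] V_def by auto
    define W0 where "W0 = wseg c ` {..<5}"
    have cinP: "c i \<in> P" if "i < 10" for i using cfg that unfolding config_def by blast
    have cinj: "inj_on c {..<10}" using cfg unfolding config_def by blast
    have W0V: "W0 \<subseteq> V"
    proof
      fix w assume "w \<in> W0"
      then obtain k where k: "k < 5" "w = wseg c k" unfolding W0_def by blast
      have "c (2*k) \<noteq> c (2*k+1)" using inj_onD[OF cinj, of "2*k" "2*k+1"] k by auto
      then show "w \<in> V" using seg_in_V[of "c (2*k)" P "c (2*k+1)"] cinP k
        unfolding V_def wseg_def by auto
    qed
    have "inj_on (wseg c) {..<5}"
    proof (rule inj_onI)
      fix j k assume jk: "j \<in> {..<5::nat}" "k \<in> {..<5::nat}" "wseg c j = wseg c k"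
      show "j = k"
      proof (rule ccontr)
        assume "j \<noteq> k"
        then have "wseg c j \<inter> wseg c k = {}" using w_disj[OF cfg] jk by auto
        moreover have "c (2*j) \<in> wseg c j" unfolding wseg_def by simp
        ultimately show False using jk by auto
      qed
    qed
    then have cardW0: "card W0 = 5" unfolding W0_def by (simp add: card_image)
    have finW0: "finite W0" unfolding W0_def by simp
    have cn: "\<exists>z\<in>W0. E x z \<and> E z y" if "x \<in> V" "y \<in> V" for x y
    proof -
      have "x \<in> seg_vertices P" "y \<in> seg_vertices P" using that V_def by auto
      obtain p q where x: "x = closed_segment p q" using V_cases[OF \<open>x \<in> seg_vertices P\<close>] by blast
      obtain p' q' where y: "y = closed_segment p' q'" using V_cases[OF \<open>y \<in> seg_vertices P\<close>] by blast
      obtain k where "k < 5" "x \<inter> wseg c k = {}" "y \<inter> wseg c k = {}"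
        using avoid2[OF cfg, of p q p' q'] x y by blast
      then show ?thesis unfolding E_def seg_disjoint_def W0_def by blast
    qed
    define M where "M = {card U | U. mutual_visibility_set V E U}"
    have finM: "finite M"
    proof -
      have "M \<subseteq> {..card V}"
        unfolding M_def mutual_visibility_set_def using card_mono[OF finV] by auto
      then show ?thesis using finite_subset by blast
    qed
    have mvl: "mutual_visibility_set V E (V - W0)"
      using mv_lower[OF W0V, of E] cn by blast
    then have lowM: "card (V - W0) \<in> M" unfolding M_def by blast
    have mu_eq: "mu (seg_vertices P) seg_disjoint = Max M" unfolding mu_def M_def V_def E_def ..
    have low: "card (V - W0) \<le> Max M" using Max_ge[OF finM lowM] .
    have cVW: "card (V - W0) + 5 = card V"
      using card_Diff_subset[OF finW0 W0V] cardW0 card_mono[OF finV W0V] by simp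
    have "Max M \<in> M" using Max_in[OF finM] lowM by blast
    then have "\<exists>U. Max M = card U \<and> mutual_visibility_set V E U"
      by (simp add: M_def)
    then obtain U where U: "mutual_visibility_set V E U" "card U = Max M" by metis
    have UV: "U \<subseteq> V" using U(1) unfolding mutual_visibility_set_def by blast
    have up: "Max M + 4 \<le> card V"
    proof (rule ccontr)
      assume "\<not> Max M + 4 \<le> card V"
      then have c3: "card (V - U) \<le> 3"
        using card_Diff_subset[OF finite_subset[OF UV finV] UV] U(2) by simp
      have n9: "card P \<ge> 9" using cP by simp
      have sub: "V - U \<subseteq> seg_vertices P" using V_def by blast
      obtain x y where "x \<in> seg_vertices P \<and> y \<in> seg_vertices P \<and> x \<notin> V - U \<and> y \<notin> V - U \<and> x \<noteq> y
        \<and> x \<inter> y \<noteq> {} \<and> (\<forall>w\<in>V - U. w \<inter> x \<noteq> {} \<or> w \<inter> y \<noteq> {})"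
        using hit_pair[OF fin n9 gp sub c3] by blast
      then have xy: "x \<in> V" "y \<in> V" "x \<notin> V - U" "y \<notin> V - U" "x \<noteq> y"
        "x \<inter> y \<noteq> {}" "\<forall>w\<in>V - U. w \<inter> x \<noteq> {} \<or> w \<inter> y \<noteq> {}"
        unfolding V_def by auto
      obtain z where z: "z \<in> W0" "E x z" "E z y" using cn xy by blast
      show False
      proof (rule mv_upper[OF U(1), of x y z])
        show "x \<in> U" "y \<in> U" "x \<noteq> y" using xy by auto
        show "\<not> E x y" using xy unfolding E_def seg_disjoint_def by blast
        show "z \<in> V" using z W0V by blast
        show "E x z" "E z y" using z by auto
        fix w assume "w \<in> V - U"
        then show "\<not> (E x w \<and> E w y)" using xy unfolding E_def seg_disjoint_def by blast
      qed
    qed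
    show ?thesis using low up cVW cardV mu_eq by linarith
  qed
  then show ?thesis by blast
qed

end
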